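(* Let $L$ be a post-Lie-Rinehart algebra over $R$, with anchor map $\rho$ and connection $\rhd$. Then $E\ell_R(L)$ is a subalgebra of the algebra (under composition) generated by $\{\delta X,\tilde{\delta}X : X\in L\}$.
   Context: Let $R$ be a commutative unital algebra. A Lie-Rinehart algebra over $R$ is an $R$-module $L$ with a Lie bracket $\llbracket\cdot,\cdot\rrbracket$ and an $R$-linear Lie algebra morphism $\rho:L\to\mathrm{Der}(R)$ (the anchor) such that $\llbracket X,fY\rrbracket=(\rho(X)f)Y+f\llbracket X,Y\rrbracket$ for $f\in R$ and $X,Y\in L$. A connection is a map $L\times L\to L$, $(X,Y)\mapsto X\rhd Y$, that is $R$-linear in $X$ and satisfies $X\rhd(fY)=(\rho(X)f)Y+f\,X\rhd Y$. Its torsion is $T(X,Y)=X\rhd Y-Y\rhd X-\llbracket X,Y\rrbracket$ and its curvature is $\mathcal{R}(X,Y,Z)=X\rhd(Y\rhd Z)-Y\rhd(X\rhd Z)-\llbracket X,Y\rrbracket\rhd Z$. A post-Lie-Rinehart algebra is a Lie-Rinehart algebra with a connection that is flat ($\mathcal{R}=0$) and has constant torsion ($X\rhd T(Y,Z)=T(X\rhd Y,Z)+T(Y,X\rhd Z)$). Put $[X,Y]:=-T(X,Y)$; then $(L,[\cdot,\cdot],\rhd)$ is a post-Lie algebra. The connection extends to $\mathrm{Hom}_R(L)$ by $(X\rhd u)(Y)=X\rhd u(Y)-u(X\rhd Y)$. For $X\in L$ define $\delta X\in\mathrm{Hom}_R(L)$ by $\delta X(Z)=Z\rhd X$, and $\tilde\delta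 X$ by $\tilde\delta X(Z)=Z\rhd X+[Z,X]$. $E\ell_R(L)$, the algebra of elementary $R$-module endomorphisms, is the $R$-module subalgebra of $\mathrm{Hom}_R(L)$ (with composition as product) generated by the elements $Y_1\rhd(Y_2\rhd(\cdots(Y_n\rhd\delta X)\cdots))$ with $n\ge 0$ and $X,Y_1,\dots,Y_n\in L$. *)

theory Defs
  imports Main
begin

text \<open>The Lie bracket is br, the anchor is rho (rho X is a map R -> R), the
connection is cn (cn X Y stands for X |> Y).\<close>

definition is_module :: "('r::comm_ring_1 \<Rightarrow> 'l::ab_group_add \<Rightarrow> 'l) \<Rightarrow> bool" where
  "is_module sm \<longleftrightarrow>
     (\<forall>a b x. sm (a + b) x = sm a x + sm b x) \<and>
     (\<forall>a x y. sm a (x + y) = sm a x + sm a y) \<and>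
     (\<forall>a b x. sm (a * b) x = sm a (sm b x)) \<and>
     (\<forall>x. sm 1 x = x)"

definition is_derivation :: "('r::comm_ring_1 \<Rightarrow> 'r) \<Rightarrow> bool" where
  "is_derivation D \<longleftrightarrow>
     (\<forall>f g. D (f + g) = D f + D g) \<and> (\<forall>f g. D (f * g) = D f * g + f * D g)"

definition lie_rinehart ::
  "('r::comm_ring_1 \<Rightarrow> 'l::ab_group_add \<Rightarrow> 'l) \<Rightarrow> ('l \<Rightarrow> 'l \<Rightarrow> 'l) \<Rightarrow> ('l \<Rightarrow> 'r \<Rightarrow> 'r) \<Rightarrow> bool" where
  "lie_rinehart sm br rho \<longleftrightarrow>
     is_module sm \<and>
     \<comment> \<open>Lie algebra: biadditive, alternating, Jacobi\<close>
     (\<forall>x y z. br (x + y) z = br x z + br y z) \<and>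
     (\<forall>x y z. br x (y + z) = br x y + br x z) \<and>
     (\<forall>x. br x x = 0) \<and>
     (\<forall>x y z. br x (br y z) + br y (br z x) + br z (br x y) = 0) \<and>
     \<comment> \<open>anchor: R-linear map into derivations, Lie algebra morphism\<close>
     (\<forall>x. is_derivation (rho x)) \<and>
     (\<forall>x y f. rho (x + y) f = rho x f + rho y f) \<and>
     (\<forall>g x f. rho (sm g x) f = g * rho x f) \<and>
     (\<forall>x y f. rho (br x y) f = rho x (rho y f) - rho y (rho x f)) \<and>
     \<comment> \<open>Leibniz rule\<close>
     (\<forall>x f y. br x (sm f y) = sm (rho x f) y + sm f (br x y))"

definition is_connection ::
  "('r::comm_ring_1 \<Rightarrow> 'l::ab_group_add \<Rightarrow> 'l) \<Rightarrow> ('l \<Rightarrow> 'r \<Rightarrow> 'r) \<Rightarrow> ('l \<Rightarrow> 'l \<Rightarrow> 'l) \<Rightarrow> bool" where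
  "is_connection sm rho cn \<longleftrightarrow>
     (\<forall>x y z. cn (x + y) z = cn x z + cn y z) \<and>
     (\<forall>f x z. cn (sm f x) z = sm f (cn x z)) \<and>
     (\<forall>x y z. cn x (y + z) = cn x y + cn x z) \<and>
     (\<forall>x f y. cn x (sm f y) = sm (rho x f) y + sm f (cn x y))"

definition torsion :: "('l::ab_group_add \<Rightarrow> 'l \<Rightarrow> 'l) \<Rightarrow> ('l \<Rightarrow> 'l \<Rightarrow> 'l) \<Rightarrow> 'l \<Rightarrow> 'l \<Rightarrow> 'l" where
  "torsion br cn x y = cn x y - cn y x - br x y"

definition curvature :: "('l::ab_group_add \<Rightarrow> 'l \<Rightarrow> 'l) \<Rightarrow> ('l \<Rightarrow> 'l \<Rightarrow> 'l) \<Rightarrow> 'l \<Rightarrow> 'l \<Rightarrow> 'l \<Rightarrow> 'l" where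
  "curvature br cn x y z = cn x (cn y z) - cn y (cn x z) - cn (br x y) z"

definition post_lie_rinehart ::
  "('r::comm_ring_1 \<Rightarrow> 'l::ab_group_add \<Rightarrow> 'l) \<Rightarrow> ('l \<Rightarrow> 'l \<Rightarrow> 'l) \<Rightarrow> ('l \<Rightarrow> 'r \<Rightarrow> 'r)
     \<Rightarrow> ('l \<Rightarrow> 'l \<Rightarrow> 'l) \<Rightarrow> bool" where
  "post_lie_rinehart sm br rho cn \<longleftrightarrow>
     lie_rinehart sm br rho \<and> is_connection sm rho cn \<and>
     (\<forall>x y z. curvature br cn x y z = 0) \<and>
     (\<forall>x y z. cn x (torsion br cn y z) = torsion br cn (cn x y) z + torsion br cn y (cn x z))"

definition plbr :: "('l::ab_group_add \<Rightarrow> 'l \<Rightarrow> 'l) \<Rightarrow> ('l \<Rightarrow> 'l \<Rightarrow> 'l) \<Rightarrow> 'l \<Rightarrow> 'l \<Rightarrow> 'l" where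
  "plbr br cn x y = - torsion br cn x y"

definition conn_hom :: "('l::ab_group_add \<Rightarrow> 'l \<Rightarrow> 'l) \<Rightarrow> 'l \<Rightarrow> ('l \<Rightarrow> 'l) \<Rightarrow> ('l \<Rightarrow> 'l)" where
  "conn_hom cn x u = (\<lambda>y. cn x (u y) - u (cn x y))"

definition delta :: "('l \<Rightarrow> 'l \<Rightarrow> 'l) \<Rightarrow> 'l \<Rightarrow> ('l \<Rightarrow> 'l)" where
  "delta cn x = (\<lambda>z. cn z x)"

definition tdelta :: "('l::ab_group_add \<Rightarrow> 'l \<Rightarrow> 'l) \<Rightarrow> ('l \<Rightarrow> 'l \<Rightarrow> 'l) \<Rightarrow> 'l \<Rightarrow> ('l \<Rightarrow> 'l)" where
  "tdelta br cn x = (\<lambda>z. cn z x + plbr br cn z x)"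

inductive_set ralg_gen :: "('r \<Rightarrow> 'l::ab_group_add \<Rightarrow> 'l) \<Rightarrow> ('l \<Rightarrow> 'l) set \<Rightarrow> ('l \<Rightarrow> 'l) set"
  for sm :: "'r \<Rightarrow> 'l \<Rightarrow> 'l" and G :: "('l \<Rightarrow> 'l) set" where
  gen: "u \<in> G \<Longrightarrow> u \<in> ralg_gen sm G"
| zero: "(\<lambda>_. 0) \<in> ralg_gen sm G"
| add: "u \<in> ralg_gen sm G \<Longrightarrow> v \<in> ralg_gen sm G \<Longrightarrow> (\<lambda>y. u y + v y) \<in> ralg_gen sm G"
| scal: "u \<in> ralg_gen sm G \<Longrightarrow> (\<lambda>y. sm f (u y)) \<in> ralg_gen sm G"
| comp: "u \<in> ralg_gen sm G \<Longrightarrow> v \<in> ralg_gen sm G \<Longrightarrow> u \<circ> v \<in> ralg_gen sm G"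

inductive_set el_gens :: "('l::ab_group_add \<Rightarrow> 'l \<Rightarrow> 'l) \<Rightarrow> ('l \<Rightarrow> 'l) set"
  for cn :: "'l \<Rightarrow> 'l \<Rightarrow> 'l" where
  base: "delta cn x \<in> el_gens cn"
| step: "u \<in> el_gens cn \<Longrightarrow> conn_hom cn y u \<in> el_gens cn"

definition El :: "('r \<Rightarrow> 'l::ab_group_add \<Rightarrow> 'l) \<Rightarrow> ('l \<Rightarrow> 'l \<Rightarrow> 'l) \<Rightarrow> ('l \<Rightarrow> 'l) set" where
  "El sm cn = ralg_gen sm (el_gens cn)"

end

theory Submission
  imports Defs
begin

definition addv :: "('l::ab_group_add \<Rightarrow> 'l) \<Rightarrow> bool" where
  "addv u \<longleftrightarrow> (\<forall>a b. u (a + b) = u a + u b)"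

lemma addv_diff: "addv u \<Longrightarrow> u (a - b) = u a - u b"
proof -
  assume "addv u"
  then have "u (a - b) + u b = u a" unfolding addv_def by (metis diff_add_cancel)
  then show ?thesis by (metis add_diff_cancel)
qed

lemma addv_zero: "addv u \<Longrightarrow> u 0 = 0"
  using addv_diff[of u 0 0] by simp

lemma addv_neg: "addv u \<Longrightarrow> u (- a) = - u a"
  using addv_diff[of u 0 a] addv_zero[of u] by simp

context
  fixes sm :: "'r::comm_ring_1 \<Rightarrow> 'l::ab_group_add \<Rightarrow> 'l"
    and br :: "'l \<Rightarrow> 'l \<Rightarrow> 'l" and rho :: "'l \<Rightarrow> 'r \<Rightarrow> 'r" and cn :: "'l \<Rightarrow> 'l \<Rightarrow> 'l"
  assumes P: "post_lie_rinehart sm br rho cn"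
begin

lemma LR: "lie_rinehart sm br rho" using P unfolding post_lie_rinehart_def by blast
lemma CN: "is_connection sm rho cn" using P unfolding post_lie_rinehart_def by blast
lemma MOD: "is_module sm" using LR unfolding lie_rinehart_def by blast

lemma cn_add1: "cn (a + b) c = cn a c + cn b c" using CN unfolding is_connection_def by blast
lemma cn_add2: "cn a (b + c) = cn a b + cn a c" using CN unfolding is_connection_def by blast
lemma cn_sm2: "cn x (sm f y) = sm (rho x f) y + sm f (cn x y)" using CN unfolding is_connection_def by blast
lemma addv_cn1: "addv (\<lambda>a. cn a c)" unfolding addv_def using cn_add1 by blast
lemma addv_cn2: "addv (cn a)" unfolding addv_def using cn_add2 by blast
lemma addv_sm: "addv (sm f)" using MOD unfolding addv_def is_module_def by blast

lemma br_add1: "br (a + b) c = br a c + br b c" using LR unfolding lie_rinehart_def by (elim conjE) simp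
lemma br_add2: "br a (b + c) = br a b + br a c" using LR unfolding lie_rinehart_def by blast
lemma br_alt: "br a a = 0" using LR unfolding lie_rinehart_def by (elim conjE) simp
lemma br_anti: "br a b + br b a = 0"
proof -
  have "0 = br (a+b) (a+b)" by (rule br_alt[symmetric])
  also have "\<dots> = br a a + br a b + (br b a + br b b)" by (simp add: br_add1 br_add2 add.assoc)
  also have "\<dots> = br a b + br b a" by (simp add: br_alt)
  finally show ?thesis by simp
qed

lemma flat: "cn x (cn y z) - cn y (cn x z) = cn (br x y) z"
  using P unfolding post_lie_rinehart_def curvature_def by (metis diff_eq_eq add_0)

lemma ctors: "cn x (plbr br cn y z) = plbr br cn (cn x y) z + plbr br cn y (cn x z)"
proof -
  have "cn x (torsion br cn y z) = torsion br cn (cn x y) z + torsion br cn y (cn x z)"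
    using P unfolding post_lie_rinehart_def by blast
  then show ?thesis unfolding plbr_def using addv_neg[OF addv_cn2, of x]
    by (simp add: add.commute)
qed

lemma sm_neg1: "sm (-1) a = - a"
proof -
  have "sm (1 + -1) a = sm 1 a + sm (-1) a" using MOD unfolding is_module_def by blast
  moreover have "sm 0 a = 0" using addv_zero[OF addv_sm] MOD unfolding is_module_def
    by (metis add_cancel_right_right add_0)
  moreover have "sm 1 a = a" using MOD unfolding is_module_def by blast
  ultimately show ?thesis by (simp add: eq_neg_iff_add_eq_0 add.commute)
qed

abbreviation "A \<equiv> ralg_gen sm (range (delta cn) \<union> range (tdelta br cn))"

lemma A_neg: "u \<in> A \<Longrightarrow> (\<lambda>z. - u z) \<in> A"
  using ralg_gen.scal[of u sm _ "-1"] sm_neg1 by simp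

lemma A_addv: "u \<in> A \<Longrightarrow> addv u"
proof (induction rule: ralg_gen.induct)
  case (gen u)
  then show ?case
  proof
    assume "u \<in> range (delta cn)" then show ?thesis
      unfolding delta_def using addv_cn1 by auto
  next
    assume "u \<in> range (tdelta br cn)"
    then obtain x where u: "u = tdelta br cn x" by blast
    show ?thesis unfolding u tdelta_def addv_def plbr_def torsion_def
      by (simp add: cn_add1 cn_add2 br_add1 algebra_simps)
  qed
next
  case zero then show ?case unfolding addv_def by simp
next
  case (add u v) then show ?case unfolding addv_def by (simp add: algebra_simps)
next
  case (scal u f) then show ?case using addv_sm unfolding addv_def by simp
next
  case (comp u v) then show ?case unfolding addv_def by simp
qed

lemma key_delta: "cn y (cn z x) - cn (cn y z) x = cn z (cn y x) - cn (tdelta br cn y z) x"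
proof -
  have t: "tdelta br cn y z = cn y z + br z y"
    unfolding tdelta_def plbr_def torsion_def by simp
  have "cn (tdelta br cn y z) x = cn (cn y z) x + cn (br z y) x" by (simp add: t cn_add1)
  moreover have "cn (br y z) x + cn (br z y) x = 0"
    using cn_add1[of "br y z" "br z y" x] br_anti[of y z] addv_zero[OF addv_cn1] by simp
  moreover note flat[of y z x]
  ultimately show ?thesis by (simp add: algebra_simps eq_neg_iff_add_eq_0)
qed

lemma ch_delta: "conn_hom cn y (delta cn x) = (\<lambda>z. delta cn (cn y x) z + - (delta cn x \<circ> tdelta br cn y) z)"
  unfolding conn_hom_def by (rule ext) (simp add: delta_def key_delta)

lemma ch_tdelta: "conn_hom cn y (tdelta br cn x) = (\<lambda>z. tdelta br cn (cn y x) z + - (delta cn x \<circ> tdelta br cn y) z)"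
proof
  fix z
  have "conn_hom cn y (tdelta br cn x) z = cn y (cn z x) + cn y (plbr br cn z x)
     - cn (cn y z) x - plbr br cn (cn y z) x"
    unfolding conn_hom_def tdelta_def by (simp add: cn_add2)
  also have "\<dots> = cn y (cn z x) - cn (cn y z) x + plbr br cn z (cn y x)"
    by (simp add: ctors)
  also have "\<dots> = cn z (cn y x) - cn (tdelta br cn y z) x + plbr br cn z (cn y x)"
    by (simp add: key_delta)
  finally show "conn_hom cn y (tdelta br cn x) z = tdelta br cn (cn y x) z + - (delta cn x \<circ> tdelta br cn y) z"
    by (simp add: tdelta_def delta_def)
qed

lemma A_conn: "u \<in> A \<Longrightarrow> conn_hom cn y u \<in> A"
proof (induction rule: ralg_gen.induct)
  case (gen u)
  then show ?case
  proof
    assume "u \<in> range (delta cn)"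
    then obtain x where u: "u = delta cn x" by blast
    show ?thesis unfolding u ch_delta
      by (rule ralg_gen.add, rule ralg_gen.gen, simp, rule A_neg, rule ralg_gen.comp; rule ralg_gen.gen; simp)
  next
    assume "u \<in> range (tdelta br cn)"
    then obtain x where u: "u = tdelta br cn x" by blast
    show ?thesis unfolding u ch_tdelta
      by (rule ralg_gen.add, rule ralg_gen.gen, simp, rule A_neg, rule ralg_gen.comp; rule ralg_gen.gen; simp)
  qed
next
  case zero
  have "conn_hom cn y (\<lambda>_. 0) = (\<lambda>_. 0)"
    unfolding conn_hom_def using addv_zero[OF addv_cn2] by simp
  then show ?case using ralg_gen.zero by simp
next
  case (add u v)
  have "conn_hom cn y (\<lambda>z. u z + v z) = (\<lambda>z. conn_hom cn y u z + conn_hom cn y v z)"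
    unfolding conn_hom_def by (simp add: cn_add2 algebra_simps)
  then show ?case using add ralg_gen.add by simp
next
  case (scal u f)
  have "conn_hom cn y (\<lambda>z. sm f (u z)) = (\<lambda>z. sm (rho y f) (u z) + sm f (conn_hom cn y u z))"
    unfolding conn_hom_def by (simp add: cn_sm2 addv_diff[OF addv_sm] add_diff_eq)
  then show ?case using ralg_gen.add[OF ralg_gen.scal[OF scal.hyps, of "rho y f"] ralg_gen.scal[OF scal.IH, of f]] by simp
next
  case (comp u v)
  have au: "addv u" using comp A_addv by blast
  have "conn_hom cn y (u \<circ> v) = (\<lambda>z. (conn_hom cn y u \<circ> v) z + (u \<circ> conn_hom cn y v) z)"
    unfolding conn_hom_def by (rule ext) (simp add: addv_diff[OF au])
  moreover have "(\<lambda>z. (conn_hom cn y u \<circ> v) z + (u \<circ> conn_hom cn y v) z) \<in> A"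
    by (rule ralg_gen.add[OF ralg_gen.comp[OF comp.IH(1) comp.hyps(2)] ralg_gen.comp[OF comp.hyps(1) comp.IH(2)]])
  ultimately show ?case by (simp add: comp_def)
qed

lemma el_A: "u \<in> el_gens cn \<Longrightarrow> u \<in> A"
proof (induction rule: el_gens.induct)
  case (base x) then show ?case by (intro ralg_gen.gen) auto
next
  case (step u y) then show ?case using A_conn by blast
qed

lemma main: "u \<in> ralg_gen sm (el_gens cn) \<Longrightarrow> u \<in> A"
  proof (induction rule: ralg_gen.induct)
  case (gen u) then show ?case by (rule el_A)
next
  case zero then show ?case by (rule ralg_gen.zero)
next
  case (add u v) show ?case using add.IH by (rule ralg_gen.add)
next
  case (scal u f) show ?case using scal.IH by (rule ralg_gen.scal)
next
  case (comp u v) show ?case using comp.IH by (rule ralg_gen.comp)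
qed

end

theorem mainTheorem5:
  fixes sm :: "'r::comm_ring_1 \<Rightarrow> 'l::ab_group_add \<Rightarrow> 'l"
    and br :: "'l \<Rightarrow> 'l \<Rightarrow> 'l" and rho :: "'l \<Rightarrow> 'r \<Rightarrow> 'r" and cn :: "'l \<Rightarrow> 'l \<Rightarrow> 'l"
  assumes "post_lie_rinehart sm br rho cn"
  shows "El sm cn \<subseteq> ralg_gen sm (range (delta cn) \<union> range (tdelta br cn))"
  using main[OF assms] unfolding El_def by blast

end
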